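(* Let $B$ be a finite skew brace and $x\in B$. Define $B_0:=\{0,x\}$ and, for $n\ge 1$, $B_n:=\{a\circ b: a,b\in B_{n-1}\}\cup\{\lambda_a(b): a,b\in B_{n-1}\}$. Then $B(x)=\bigcup_n B_n$.
   Context: A skew brace is a triple $(B,+,\circ)$ where $(B,+)$ and $(B,\circ)$ are groups and $a\circ(b+c)=a\circ b-a+a\circ c$ for all $a,b,c$; $0$ is the common identity of both groups. $\lambda_a(b):=-a+a\circ b$. $B(x)$ denotes the smallest subset of $B$ containing $x$ that is a subgroup of both $(B,+)$ and $(B,\circ)$. *)

theory Defs
  imports "HOL-Algebra.Group"
begin

text \<open>A skew brace on a common carrier: A is the additive group (B,+), written
  with the HOL-Algebra multiplicative notation, and M is the group (B,\<circ>).\<close>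
definition skew_brace :: "('a, 'b) monoid_scheme \<Rightarrow> ('a, 'c) monoid_scheme \<Rightarrow> bool" where
  "skew_brace A M \<longleftrightarrow> group A \<and> group M \<and> carrier A = carrier M \<and> \<one>\<^bsub>A\<^esub> = \<one>\<^bsub>M\<^esub> \<and>
     (\<forall>a\<in>carrier A. \<forall>b\<in>carrier A. \<forall>c\<in>carrier A.
        a \<otimes>\<^bsub>M\<^esub> (b \<otimes>\<^bsub>A\<^esub> c) = (a \<otimes>\<^bsub>M\<^esub> b) \<otimes>\<^bsub>A\<^esub> inv\<^bsub>A\<^esub> a \<otimes>\<^bsub>A\<^esub> (a \<otimes>\<^bsub>M\<^esub> c))"

definition brace_lambda :: "('a, 'b) monoid_scheme \<Rightarrow> ('a, 'c) monoid_scheme \<Rightarrow> 'a \<Rightarrow> 'a \<Rightarrow> 'a" where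
  "brace_lambda A M a b = inv\<^bsub>A\<^esub> a \<otimes>\<^bsub>A\<^esub> (a \<otimes>\<^bsub>M\<^esub> b)"

definition brace_gen :: "('a, 'b) monoid_scheme \<Rightarrow> ('a, 'c) monoid_scheme \<Rightarrow> 'a \<Rightarrow> 'a set" where
  "brace_gen A M x = \<Inter>{H. x \<in> H \<and> subgroup H A \<and> subgroup H M}"

fun brace_seq :: "('a, 'b) monoid_scheme \<Rightarrow> ('a, 'c) monoid_scheme \<Rightarrow> 'a \<Rightarrow> nat \<Rightarrow> 'a set" where
  "brace_seq A M x 0 = {\<one>\<^bsub>A\<^esub>, x}"
| "brace_seq A M x (Suc n) =
     {a \<otimes>\<^bsub>M\<^esub> b | a b. a \<in> brace_seq A M x n \<and> b \<in> brace_seq A M x n}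
     \<union> {brace_lambda A M a b | a b. a \<in> brace_seq A M x n \<and> b \<in> brace_seq A M x n}"

end

theory Submission
  imports Defs
begin

lemma fin_closed_subgroup:
  fixes G (structure)
  assumes G: "group G" and U: "U \<subseteq> carrier G" "finite U" "\<one>\<^bsub>G\<^esub> \<in> U"
    and cl: "\<And>a b. a \<in> U \<Longrightarrow> b \<in> U \<Longrightarrow> a \<otimes>\<^bsub>G\<^esub> b \<in> U"
  shows "subgroup U G"
proof -
  interpret group G by (rule G)
  have inv: "inv a \<in> U" if a: "a \<in> U" for a
  proof -
    have ac: "a \<in> carrier G" using a U by auto
    have "(\<lambda>b. a \<otimes> b) ` U = U"
    proof (rule endo_inj_surj)
      show "inj_on (\<lambda>b. a \<otimes> b) U" using U ac Units_l_cancel Units_eq unfolding inj_on_def by (metis subsetD)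
    qed (use U cl a in auto)
    then obtain c where c: "c \<in> U" "a \<otimes> c = \<one>" using U(3) by (metis imageE)
    have cc: "c \<in> carrier G" using c U by auto
    have "c \<otimes> a = \<one>" using inv_comm[OF c(2) ac cc] .
    then have "inv a = c" using inv_equality ac cc by blast
    then show ?thesis using c by simp
  qed
  show ?thesis by (rule subgroupI) (use U cl inv in auto)
qed

context
  fixes A :: "('a, 'b) monoid_scheme" and M :: "('a, 'c) monoid_scheme" and x :: 'a
  assumes sb: "skew_brace A M" and xc: "x \<in> carrier A"
begin

lemma gA: "group A" and gM: "group M" and car: "carrier A = carrier M"
  and one: "\<one>\<^bsub>A\<^esub> = \<one>\<^bsub>M\<^esub>"
  using sb by (auto simp: skew_brace_def)

lemma mM_car: "a \<in> carrier A \<Longrightarrow> b \<in> carrier A \<Longrightarrow> a \<otimes>\<^bsub>M\<^esub> b \<in> carrier A"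
proof -
  interpret M: group M by (rule gM)
  show "a \<in> carrier A \<Longrightarrow> b \<in> carrier A \<Longrightarrow> a \<otimes>\<^bsub>M\<^esub> b \<in> carrier A" using car by simp
qed

lemma lam_car: "a \<in> carrier A \<Longrightarrow> b \<in> carrier A \<Longrightarrow> brace_lambda A M a b \<in> carrier A"
proof -
  interpret A: group A by (rule gA)
  show "a \<in> carrier A \<Longrightarrow> b \<in> carrier A \<Longrightarrow> brace_lambda A M a b \<in> carrier A"
    unfolding brace_lambda_def using mM_car by simp
qed

lemma seq_car: "brace_seq A M x n \<subseteq> carrier A"
proof (induction n)
  case 0
  interpret A: group A by (rule gA)
  show ?case using xc by simp
next
  case (Suc n)
  show ?case
  proof
    fix y assume "y \<in> brace_seq A M x (Suc n)"
    then obtain a b where ab: "a \<in> brace_seq A M x n" "b \<in> brace_seq A M x n"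
      and "y = a \<otimes>\<^bsub>M\<^esub> b \<or> y = brace_lambda A M a b" by auto
    moreover have "a \<in> carrier A" "b \<in> carrier A" using ab Suc by auto
    ultimately show "y \<in> carrier A" using mM_car lam_car by auto
  qed
qed

lemma seq_one: "\<one>\<^bsub>A\<^esub> \<in> brace_seq A M x n"
proof (induction n)
  case 0 then show ?case by simp
next
  case (Suc n)
  interpret M: group M by (rule gM)
  have "\<one>\<^bsub>A\<^esub> \<otimes>\<^bsub>M\<^esub> \<one>\<^bsub>A\<^esub> = \<one>\<^bsub>A\<^esub>" using one by simp
  then show ?case using Suc by force
qed

lemma seq_suc: "brace_seq A M x n \<subseteq> brace_seq A M x (Suc n)"
proof
  interpret M: group M by (rule gM)
  fix a assume a: "a \<in> brace_seq A M x n"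
  have "a \<in> carrier M" using a seq_car car by auto
  then have "a \<otimes>\<^bsub>M\<^esub> \<one>\<^bsub>A\<^esub> = a" using one by simp
  then show "a \<in> brace_seq A M x (Suc n)" using a seq_one by force
qed

lemma seq_mono: "m \<le> n \<Longrightarrow> brace_seq A M x m \<subseteq> brace_seq A M x n"
  by (rule lift_Suc_mono_le[where f="brace_seq A M x"]) (use seq_suc in auto)

lemma U_clM: "a \<in> (\<Union>n. brace_seq A M x n) \<Longrightarrow> b \<in> (\<Union>n. brace_seq A M x n) \<Longrightarrow>
   a \<otimes>\<^bsub>M\<^esub> b \<in> (\<Union>n. brace_seq A M x n) \<and> brace_lambda A M a b \<in> (\<Union>n. brace_seq A M x n)"
proof -
  assume "a \<in> (\<Union>n. brace_seq A M x n)" "b \<in> (\<Union>n. brace_seq A M x n)"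
  then obtain m k where "a \<in> brace_seq A M x m" "b \<in> brace_seq A M x k" by auto
  then have "a \<in> brace_seq A M x (max m k)" "b \<in> brace_seq A M x (max m k)"
    using seq_mono by (meson max.cobounded1 max.cobounded2 subsetD)+
  then have "a \<otimes>\<^bsub>M\<^esub> b \<in> brace_seq A M x (Suc (max m k)) \<and>
     brace_lambda A M a b \<in> brace_seq A M x (Suc (max m k))" by auto
  then show ?thesis by blast
qed

end

theorem mainTheorem17:
  fixes A :: "('a, 'b) monoid_scheme" and M :: "('a, 'c) monoid_scheme" and x :: 'a
  assumes "skew_brace A M" and "finite (carrier A)" and "x \<in> carrier A"
  shows "brace_gen A M x = (\<Union>n. brace_seq A M x n)"
proof -
  note sb = assms(1) and xc = assms(3)
  define U where "U = (\<Union>n. brace_seq A M x n)"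
  have gA: "group A" and gM: "group M" and car: "carrier A = carrier M"
    and one: "\<one>\<^bsub>A\<^esub> = \<one>\<^bsub>M\<^esub>" using gA[OF sb xc] gM[OF sb xc] car[OF sb xc] one[OF sb xc] by auto
  interpret A: group A by (rule gA)
  interpret M: group M by (rule gM)
  have Uc: "U \<subseteq> carrier A" using seq_car[OF sb xc] U_def by auto
  have Uf: "finite U" using Uc assms(2) finite_subset by blast
  have U1: "\<one>\<^bsub>A\<^esub> \<in> U" using seq_one[OF sb xc] U_def by auto
  have "x \<in> brace_seq A M x 0" by simp
  then have xU: "x \<in> U" using U_def by blast
  have clM: "\<And>a b. a \<in> U \<Longrightarrow> b \<in> U \<Longrightarrow> a \<otimes>\<^bsub>M\<^esub> b \<in> U"
   and clL: "\<And>a b. a \<in> U \<Longrightarrow> b \<in> U \<Longrightarrow> brace_lambda A M a b \<in> U"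
    using U_clM[OF sb xc] U_def by auto
  have subM: "subgroup U M"
    by (rule fin_closed_subgroup[OF gM]) (use Uc car Uf U1 one clM in auto)
  have clA: "a \<otimes>\<^bsub>A\<^esub> b \<in> U" if a: "a \<in> U" and b: "b \<in> U" for a b
  proof -
    have ac: "a \<in> carrier A" using a Uc by auto
    have "(\<lambda>c. brace_lambda A M a c) ` U = U"
    proof (rule endo_inj_surj)
      show "inj_on (\<lambda>c. brace_lambda A M a c) U"
      proof (rule inj_onI)
        fix c d assume cd: "c \<in> U" "d \<in> U" "brace_lambda A M a c = brace_lambda A M a d"
        have cc: "c \<in> carrier M" "d \<in> carrier M" "a \<in> carrier M" using cd ac Uc car by auto
        have "a \<otimes>\<^bsub>M\<^esub> c = a \<otimes>\<^bsub>M\<^esub> d"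
        proof -
          have "a \<otimes>\<^bsub>M\<^esub> c \<in> carrier A" "a \<otimes>\<^bsub>M\<^esub> d \<in> carrier A" "inv\<^bsub>A\<^esub> a \<in> Units A"
            using cc car by (auto simp: A.Units_eq)
          then show ?thesis using cd(3) A.Units_l_cancel unfolding brace_lambda_def by blast
        qed
        moreover have "a \<in> Units M" using cc by (simp add: M.Units_eq)
        ultimately show "c = d" using cc M.Units_l_cancel by blast
      qed
    qed (use Uf clL a in auto)
    then obtain c where c: "c \<in> U" "b = brace_lambda A M a c" using b by (metis imageE)
    have cc: "c \<in> carrier A" using c Uc by auto
    have amc: "a \<otimes>\<^bsub>M\<^esub> c \<in> carrier A" using ac cc car by simp
    have "a \<otimes>\<^bsub>A\<^esub> b = (a \<otimes>\<^bsub>A\<^esub> inv\<^bsub>A\<^esub> a) \<otimes>\<^bsub>A\<^esub> (a \<otimes>\<^bsub>M\<^esub> c)"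
      unfolding c brace_lambda_def using ac amc by (simp add: A.m_assoc[symmetric])
    also have "\<dots> = a \<otimes>\<^bsub>M\<^esub> c" using ac amc by simp
    finally show ?thesis using clM a c by simp
  qed
  have subA: "subgroup U A"
    by (rule fin_closed_subgroup[OF gA]) (use Uc Uf U1 clA in auto)
  have le1: "brace_gen A M x \<subseteq> U" unfolding brace_gen_def using subA subM xU by auto
  have le2: "brace_seq A M x n \<subseteq> H" if H: "x \<in> H" "subgroup H A" "subgroup H M" for H n
  proof (induction n)
    case 0 then show ?case using H by (auto simp: subgroup.one_closed)
  next
    case (Suc n)
    have cl1: "brace_lambda A M a b \<in> H" if "a \<in> H" "b \<in> H" for a b
      unfolding brace_lambda_def using H that
      by (simp add: subgroup.m_closed subgroup.m_inv_closed)
    have cl2: "a \<otimes>\<^bsub>M\<^esub> b \<in> H" if "a \<in> H" "b \<in> H" for a b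
      using H(3) that by (rule subgroup.m_closed)
    show ?case
    proof
      fix y assume "y \<in> brace_seq A M x (Suc n)"
      then obtain a b where ab: "a \<in> brace_seq A M x n" "b \<in> brace_seq A M x n"
        and y: "y = a \<otimes>\<^bsub>M\<^esub> b \<or> y = brace_lambda A M a b" by auto
      have "a \<in> H" "b \<in> H" using ab Suc by auto
      then show "y \<in> H" using y cl1 cl2 by metis
    qed
  qed
  have "U \<subseteq> brace_gen A M x" unfolding brace_gen_def U_def using le2 by blast
  then show ?thesis using le1 U_def by auto
qed

end
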